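(* Let $k$ be a commutative ring containing $1/2$, let $R$ be a smooth commutative $k$-algebra such that $\mathrm{Der}_k(R)$ is free with a basis $\tau_1,\dots,\tau_n$ of pairwise commuting derivations, and let $g=(g^{ij})\in GL_n(R)$ be such that the derivations $\tau'_i=g^{ij}\tau_j$ pairwise commute. Let $A=(g^{-1})^{t}$, i.e. $A^{\alpha\beta}=(g^{-1})^{\beta\alpha}$ (the matrix expressing the basis of $1$-forms dual to $(\tau'_i)$ in terms of the basis dual to $(\tau_i)$). With summation over repeated indices define $$h_\Omega^{ij}=\tau_p\tau_j(g^{ip})+\tfrac12\,\tau_q(g^{ip})\,\tau_p(g^{rq})\,(g^{-1})^{jr},$$ $$g^{i\alpha\gamma}=g^{iq}\tau_q\big((A^{-1})^{\alpha\mu}\big)A^{\mu\gamma},\qquad h_E^{ij}=\tau_j(g^{i\nu\nu})+\tfrac12\,g^{iq}\tau_j\big((A^{-1})^{\mu\beta}\big)A^{\beta\gamma}\tau_q\big((A^{-1})^{\gamma\nu}\big)A^{\nu\mu}.$$ Then $h^{ij}:=h_\Omega^{ij}-h_E^{ij}=0$ for all $i,j$.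
   Context: $(g^{-1})^{jr}$ is the $(j,r)$ entry of $g^{-1}$. Repeated indices are summed. *)

theory Defs
  imports "HOL-Analysis.Analysis"
begin

text \<open>Structure map of a k-algebra: a unital ring homomorphism phi from k to R.\<close>
definition ring_hom_map :: "('k::comm_ring_1 \<Rightarrow> 'r::comm_ring_1) \<Rightarrow> bool" where
  "ring_hom_map phi \<longleftrightarrow> phi 1 = 1 \<and> (\<forall>a b. phi (a + b) = phi a + phi b)
     \<and> (\<forall>a b. phi (a * b) = phi a * phi b)"

definition is_k_derivation :: "('k::comm_ring_1 \<Rightarrow> 'r::comm_ring_1) \<Rightarrow> ('r \<Rightarrow> 'r) \<Rightarrow> bool" where
  "is_k_derivation phi D \<longleftrightarrow>
     (\<forall>x y. D (x + y) = D x + D y) \<and>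
     (\<forall>c x. D (phi c * x) = phi c * D x) \<and>
     (\<forall>x y. D (x * y) = x * D y + y * D x)"

definition is_der_basis :: "('k::comm_ring_1 \<Rightarrow> 'r::comm_ring_1) \<Rightarrow> ('n::finite \<Rightarrow> 'r \<Rightarrow> 'r) \<Rightarrow> bool" where
  "is_der_basis phi tau \<longleftrightarrow>
     (\<forall>i. is_k_derivation phi (tau i)) \<and>
     (\<forall>D. is_k_derivation phi D \<longrightarrow> (\<exists>!c::'n \<Rightarrow> 'r. D = (\<lambda>x. \<Sum>j\<in>UNIV. c j * tau j x)))"

definition pairwise_commuting :: "('n \<Rightarrow> 'r \<Rightarrow> 'r) \<Rightarrow> bool" where
  "pairwise_commuting tau \<longleftrightarrow> (\<forall>i j. tau i \<circ> tau j = tau j \<circ> tau i)"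

definition new_ders :: "'r::comm_ring_1^'n::finite^'n \<Rightarrow> ('n \<Rightarrow> 'r \<Rightarrow> 'r) \<Rightarrow> 'n \<Rightarrow> 'r \<Rightarrow> 'r" where
  "new_ders g tau i = (\<lambda>x. \<Sum>j\<in>UNIV. g$i$j * tau j x)"

definition Amat :: "'r::comm_ring_1^'n::finite^'n \<Rightarrow> 'r^'n^'n" where
  "Amat g = transpose (matrix_inv g)"

definition h_Omega :: "('n::finite \<Rightarrow> 'r::comm_ring_1 \<Rightarrow> 'r) \<Rightarrow> 'r^'n^'n \<Rightarrow> 'r \<Rightarrow> 'n \<Rightarrow> 'n \<Rightarrow> 'r" where
  "h_Omega tau g half i j =
     (\<Sum>p\<in>UNIV. tau p (tau j (g$i$p))) +
     half * (\<Sum>q\<in>UNIV. \<Sum>p\<in>UNIV. \<Sum>r\<in>UNIV. tau q (g$i$p) * tau p (g$r$q) * (matrix_inv g)$j$r)"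

definition g3 :: "('n::finite \<Rightarrow> 'r::comm_ring_1 \<Rightarrow> 'r) \<Rightarrow> 'r^'n^'n \<Rightarrow> 'n \<Rightarrow> 'n \<Rightarrow> 'n \<Rightarrow> 'r" where
  "g3 tau g i \<alpha> \<gamma> =
     (\<Sum>q\<in>UNIV. \<Sum>\<mu>\<in>UNIV. g$i$q * tau q ((matrix_inv (Amat g))$\<alpha>$\<mu>) * (Amat g)$\<mu>$\<gamma>)"

definition h_E :: "('n::finite \<Rightarrow> 'r::comm_ring_1 \<Rightarrow> 'r) \<Rightarrow> 'r^'n^'n \<Rightarrow> 'r \<Rightarrow> 'n \<Rightarrow> 'n \<Rightarrow> 'r" where
  "h_E tau g half i j =
     (\<Sum>\<nu>\<in>UNIV. tau j (g3 tau g i \<nu> \<nu>)) +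
     half * (\<Sum>q\<in>UNIV. \<Sum>\<mu>\<in>UNIV. \<Sum>\<beta>\<in>UNIV. \<Sum>\<gamma>\<in>UNIV. \<Sum>\<nu>\<in>UNIV.
        g$i$q * tau j ((matrix_inv (Amat g))$\<mu>$\<beta>) * (Amat g)$\<beta>$\<gamma>
          * tau q ((matrix_inv (Amat g))$\<gamma>$\<nu>) * (Amat g)$\<nu>$\<mu>)"

end

theory Submission
  imports Defs
begin

lemma contract:
  fixes G g :: "'n::finite \<Rightarrow> 'n \<Rightarrow> 'r::comm_ring_1"
  assumes GgL: "\<And>p s. (\<Sum>t\<in>UNIV. G p t * g t s) = (if p = s then 1 else 0)"
  shows "(\<Sum>t\<in>UNIV. G p t * (\<Sum>s\<in>UNIV. g t s * h s)) = h p"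
proof -
  have "(\<Sum>t\<in>UNIV. G p t * (\<Sum>s\<in>UNIV. g t s * h s)) = (\<Sum>s\<in>UNIV. (\<Sum>t\<in>UNIV. G p t * g t s) * h s)"
    by (simp add: sum_distrib_left sum_distrib_right mult.assoc) (rule sum.swap)
  also have "\<dots> = (\<Sum>s\<in>UNIV. if p = s then h s else 0)" by (rule sum.cong) (auto simp: GgL)
  also have "\<dots> = h p" by simp
  finally show ?thesis .
qed

lemma partX:
  fixes G g :: "'n::finite \<Rightarrow> 'n \<Rightarrow> 'r::comm_ring_1" and d :: "'n \<Rightarrow> 'r \<Rightarrow> 'r"
  assumes GgL: "\<And>p s. (\<Sum>t\<in>UNIV. G p t * g t s) = (if p = s then 1 else 0)"
  and Cond: "\<And>a b j. (\<Sum>q\<in>UNIV. g a q * d q (g b j)) = (\<Sum>q\<in>UNIV. g b q * d q (g a j))"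
  shows "(\<Sum>q\<in>UNIV. \<Sum>p\<in>UNIV. \<Sum>r\<in>UNIV. d q (g i p) * d p (g r q) * G j r)
       = (\<Sum>q\<in>UNIV. \<Sum>p\<in>UNIV. \<Sum>t\<in>UNIV. d q (g i p) * G p t * d j (g t q))"
proof -
  have A: "d p (g r q) = (\<Sum>t\<in>UNIV. G p t * (\<Sum>s\<in>UNIV. g r s * d s (g t q)))" for p r q
    using contract[OF GgL, of p "\<lambda>s. d s (g r q)"] Cond by simp
  have "(\<Sum>q\<in>UNIV. \<Sum>p\<in>UNIV. \<Sum>r\<in>UNIV. d q (g i p) * d p (g r q) * G j r)
     = (\<Sum>q\<in>UNIV. \<Sum>p\<in>UNIV. \<Sum>r\<in>UNIV. d q (g i p) * (\<Sum>t\<in>UNIV. G p t * (\<Sum>s\<in>UNIV. g r s * d s (g t q))) * G j r)"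
    by (simp add: A[symmetric])
  also have "\<dots> = (\<Sum>q\<in>UNIV. \<Sum>p\<in>UNIV. \<Sum>t\<in>UNIV. d q (g i p) * G p t * (\<Sum>r\<in>UNIV. G j r * (\<Sum>s\<in>UNIV. g r s * d s (g t q))))"
    apply (rule sum.cong[OF refl], rule sum.cong[OF refl])
    apply (simp add: sum_distrib_left sum_distrib_right mult_ac)
    apply (rule sum.swap)
    done
  also have "\<dots> = (\<Sum>q\<in>UNIV. \<Sum>p\<in>UNIV. \<Sum>t\<in>UNIV. d q (g i p) * G p t * d j (g t q))"
    by (simp add: contract[OF GgL])
  finally show ?thesis .
qed

lemma partY:
  fixes G g :: "'n::finite \<Rightarrow> 'n \<Rightarrow> 'r::comm_ring_1" and d :: "'n \<Rightarrow> 'r \<Rightarrow> 'r"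
  assumes GgL: "\<And>p s. (\<Sum>t\<in>UNIV. G p t * g t s) = (if p = s then 1 else 0)"
  and Cond: "\<And>a b j. (\<Sum>q\<in>UNIV. g a q * d q (g b j)) = (\<Sum>q\<in>UNIV. g b q * d q (g a j))"
  shows "(\<Sum>q\<in>UNIV. \<Sum>\<mu>\<in>UNIV. \<Sum>\<beta>\<in>UNIV. \<Sum>\<gamma>\<in>UNIV. \<Sum>\<nu>\<in>UNIV.
            g i q * d j (g \<beta> \<mu>) * G \<gamma> \<beta> * d q (g \<nu> \<gamma>) * G \<mu> \<nu>)
       = (\<Sum>q\<in>UNIV. \<Sum>p\<in>UNIV. \<Sum>t\<in>UNIV. d q (g i p) * G p t * d j (g t q))"
proof -
  have "(\<Sum>q\<in>UNIV. \<Sum>\<mu>\<in>UNIV. \<Sum>\<beta>\<in>UNIV. \<Sum>\<gamma>\<in>UNIV. \<Sum>\<nu>\<in>UNIV.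
            g i q * d j (g \<beta> \<mu>) * G \<gamma> \<beta> * d q (g \<nu> \<gamma>) * G \<mu> \<nu>)
     = (\<Sum>\<mu>\<in>UNIV. \<Sum>\<beta>\<in>UNIV. \<Sum>\<gamma>\<in>UNIV. \<Sum>\<nu>\<in>UNIV. \<Sum>q\<in>UNIV.
            g i q * d j (g \<beta> \<mu>) * G \<gamma> \<beta> * d q (g \<nu> \<gamma>) * G \<mu> \<nu>)"
    apply (rule trans, rule sum.swap, rule sum.cong[OF refl])
    apply (rule trans, rule sum.swap, rule sum.cong[OF refl])
    apply (rule trans, rule sum.swap, rule sum.cong[OF refl])
    apply (rule sum.swap)
    done
  also have "\<dots> = (\<Sum>\<mu>\<in>UNIV. \<Sum>\<beta>\<in>UNIV. \<Sum>\<gamma>\<in>UNIV. d j (g \<beta> \<mu>) * G \<gamma> \<beta> *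
        (\<Sum>\<nu>\<in>UNIV. G \<mu> \<nu> * (\<Sum>q\<in>UNIV. g i q * d q (g \<nu> \<gamma>))))"
    by (simp add: sum_distrib_left sum_distrib_right mult_ac)
  also have "\<dots> = (\<Sum>\<mu>\<in>UNIV. \<Sum>\<beta>\<in>UNIV. \<Sum>\<gamma>\<in>UNIV. d j (g \<beta> \<mu>) * G \<gamma> \<beta> *
        (\<Sum>\<nu>\<in>UNIV. G \<mu> \<nu> * (\<Sum>q\<in>UNIV. g \<nu> q * d q (g i \<gamma>))))"
    by (simp add: Cond)
  also have "\<dots> = (\<Sum>\<mu>\<in>UNIV. \<Sum>\<beta>\<in>UNIV. \<Sum>\<gamma>\<in>UNIV. d j (g \<beta> \<mu>) * G \<gamma> \<beta> * d \<mu> (g i \<gamma>))"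
    by (simp add: contract[OF GgL])
  also have "\<dots> = (\<Sum>\<mu>\<in>UNIV. \<Sum>\<gamma>\<in>UNIV. \<Sum>\<beta>\<in>UNIV. d j (g \<beta> \<mu>) * G \<gamma> \<beta> * d \<mu> (g i \<gamma>))"
    by (rule sum.cong[OF refl], rule sum.swap)
  also have "\<dots> = (\<Sum>q\<in>UNIV. \<Sum>p\<in>UNIV. \<Sum>t\<in>UNIV. d q (g i p) * G p t * d j (g t q))"
    by (simp add: mult_ac)
  finally show ?thesis .
qed

lemma part1:
  fixes G g :: "'n::finite \<Rightarrow> 'n \<Rightarrow> 'r::comm_ring_1" and d :: "'n \<Rightarrow> 'r \<Rightarrow> 'r"
  assumes GgL: "\<And>p s. (\<Sum>t\<in>UNIV. G p t * g t s) = (if p = s then 1 else 0)"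
  and Cond: "\<And>a b j. (\<Sum>q\<in>UNIV. g a q * d q (g b j)) = (\<Sum>q\<in>UNIV. g b q * d q (g a j))"
  shows "(\<Sum>\<nu>\<in>UNIV. \<Sum>q\<in>UNIV. \<Sum>\<mu>\<in>UNIV. g i q * d q (g \<mu> \<nu>) * G \<nu> \<mu>)
       = (\<Sum>p\<in>UNIV. d p (g i p))"
proof -
  have "(\<Sum>\<nu>\<in>UNIV. \<Sum>q\<in>UNIV. \<Sum>\<mu>\<in>UNIV. g i q * d q (g \<mu> \<nu>) * G \<nu> \<mu>)
     = (\<Sum>\<nu>\<in>UNIV. \<Sum>\<mu>\<in>UNIV. G \<nu> \<mu> * (\<Sum>q\<in>UNIV. g i q * d q (g \<mu> \<nu>)))"
    apply (rule sum.cong[OF refl])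
    apply (subst sum.swap)
    apply (simp add: sum_distrib_left mult_ac)
    done
  also have "\<dots> = (\<Sum>\<nu>\<in>UNIV. \<Sum>\<mu>\<in>UNIV. G \<nu> \<mu> * (\<Sum>q\<in>UNIV. g \<mu> q * d q (g i \<nu>)))"
    by (simp add: Cond)
  also have "\<dots> = (\<Sum>p\<in>UNIV. d p (g i p))"
    by (simp add: contract[OF GgL])
  finally show ?thesis .
qed

lemma inv_props:
  fixes g :: "'r::comm_ring_1^'n::finite^'n"
  assumes "invertible g"
  shows "g ** matrix_inv g = mat 1 \<and> matrix_inv g ** g = mat 1"
  using assms unfolding invertible_def matrix_inv_def by (rule someI_ex)

lemma inv_unique:
  fixes A B C :: "'r::comm_ring_1^'n::finite^'n"
  assumes "B ** A = mat 1" "A ** C = mat 1"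
  shows "B = C"
  by (metis assms matrix_mul_assoc matrix_mul_lid matrix_mul_rid)

lemma Amat_inv:
  fixes g :: "'r::comm_ring_1^'n::finite^'n"
  assumes "invertible g"
  shows "matrix_inv (Amat g) = transpose g"
proof -
  have P: "g ** matrix_inv g = mat 1" "matrix_inv g ** g = mat 1" using inv_props[OF assms] by auto
  have Q: "Amat g ** transpose g = mat 1" "transpose g ** Amat g = mat 1"
    unfolding Amat_def by (metis P matrix_transpose_mul transpose_mat)+
  hence "invertible (Amat g)" unfolding invertible_def by blast
  from inv_props[OF this] have "matrix_inv (Amat g) ** Amat g = mat 1" by auto
  thus ?thesis using inv_unique Q by blast
qed

lemma der_sum:
  fixes D :: "'r::comm_ring_1 \<Rightarrow> 'r"
  assumes add: "\<And>x y. D (x + y) = D x + D y"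
  shows "D (\<Sum>x\<in>A. f x) = (\<Sum>x\<in>A. D (f x))"
proof -
  have z: "D 0 = 0" using add[of 0 0] by simp
  show ?thesis
  proof (induction A rule: infinite_finite_induct)
    case (infinite A) then show ?case using z by simp
  next
    case empty then show ?case using z by simp
  next
    case (insert x F) then show ?case using add by simp
  qed
qed

lemma cond_from_comm:
  fixes phi :: "'k::comm_ring_1 \<Rightarrow> 'r::comm_ring_1"
    and tau :: "'n::finite \<Rightarrow> 'r \<Rightarrow> 'r"
    and g :: "'r^'n^'n"
  assumes basis: "is_der_basis phi tau"
    and comm: "pairwise_commuting tau"
    and comm': "pairwise_commuting (new_ders g tau)"
  shows "(\<Sum>q\<in>UNIV. g$a$q * tau q (g$b$j)) = (\<Sum>q\<in>UNIV. g$b$q * tau q (g$a$j))"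
proof -
  have der: "is_k_derivation phi (tau i)" for i using basis unfolding is_der_basis_def by blast
  have add: "tau i (x + y) = tau i x + tau i y" for i x y using der[of i] unfolding is_k_derivation_def by blast
  have leib: "tau i (x * y) = x * tau i y + y * tau i x" for i x y using der[of i] unfolding is_k_derivation_def by blast
  have tc: "tau i (tau j x) = tau j (tau i x)" for i j x
    using comm unfolding pairwise_commuting_def by (metis comp_apply)
  define T where "T = new_ders g tau"
  have expand: "T a (T b x) = (\<Sum>i\<in>UNIV. \<Sum>j\<in>UNIV. g$a$i * g$b$j * tau i (tau j x))
      + (\<Sum>j\<in>UNIV. (\<Sum>i\<in>UNIV. g$a$i * tau i (g$b$j)) * tau j x)" for a b x
  proof -
    have "T a (T b x) = (\<Sum>i\<in>UNIV. g$a$i * (\<Sum>j\<in>UNIV. g$b$j * tau i (tau j x) + tau j x * tau i (g$b$j)))"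
      unfolding T_def new_ders_def
    proof (rule sum.cong[OF refl])
      fix i
      have "tau i (\<Sum>j\<in>UNIV. g$b$j * tau j x) = (\<Sum>j\<in>UNIV. tau i (g$b$j * tau j x))"
        by (rule der_sum, rule add)
      also have "\<dots> = (\<Sum>j\<in>UNIV. g$b$j * tau i (tau j x) + tau j x * tau i (g$b$j))"
        by (simp add: leib)
      finally show "g$a$i * tau i (\<Sum>j\<in>UNIV. g$b$j * tau j x) = g$a$i * (\<Sum>j\<in>UNIV. g$b$j * tau i (tau j x) + tau j x * tau i (g$b$j))" by simp
    qed
    also have "\<dots> = (\<Sum>i\<in>UNIV. \<Sum>j\<in>UNIV. g$a$i * g$b$j * tau i (tau j x))
      + (\<Sum>i\<in>UNIV. \<Sum>j\<in>UNIV. g$a$i * tau i (g$b$j) * tau j x)"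
      by (simp add: sum_distrib_left distrib_left sum.distrib mult_ac)
    also have "(\<Sum>i\<in>UNIV. \<Sum>j\<in>UNIV. g$a$i * tau i (g$b$j) * tau j x)
        = (\<Sum>j\<in>UNIV. (\<Sum>i\<in>UNIV. g$a$i * tau i (g$b$j)) * tau j x)"
      by (subst sum.swap) (simp add: sum_distrib_right)
    finally show ?thesis .
  qed
  have symm: "(\<Sum>i\<in>UNIV. \<Sum>j\<in>UNIV. g$a$i * g$b$j * tau i (tau j x))
     = (\<Sum>i\<in>UNIV. \<Sum>j\<in>UNIV. g$b$i * g$a$j * tau i (tau j x))" for x
    by (subst sum.swap) (simp add: tc mult_ac)
  define c where "c j = (\<Sum>q\<in>UNIV. g$a$q * tau q (g$b$j)) - (\<Sum>q\<in>UNIV. g$b$q * tau q (g$a$j))" for j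
  have zero: "(\<lambda>x::'r. 0::'r) = (\<lambda>x. \<Sum>j\<in>UNIV. c j * tau j x)"
  proof
    fix x
    have "T a (T b x) = T b (T a x)" using comm' unfolding T_def pairwise_commuting_def by (metis comp_apply)
    hence "0 = T a (T b x) - T b (T a x)" by simp
    also have "\<dots> = (\<Sum>j\<in>UNIV. c j * tau j x)"
      unfolding expand c_def using symm[of x] by (simp add: left_diff_distrib sum_subtractf)
    finally show "0 = (\<Sum>j\<in>UNIV. c j * tau j x)" .
  qed
  have zero2: "(\<lambda>x::'r. 0::'r) = (\<lambda>x. \<Sum>j\<in>UNIV. (\<lambda>_. 0) j * tau j x)" by simp
  have dz: "is_k_derivation phi (\<lambda>x. 0)" unfolding is_k_derivation_def by simp
  have H: "\<forall>D. is_k_derivation phi D \<longrightarrow> (\<exists>!c::'n \<Rightarrow> 'r. D = (\<lambda>x. \<Sum>j\<in>UNIV. c j * tau j x))"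
    using basis unfolding is_der_basis_def by (rule conjunct2)
  have "\<exists>!c::'n \<Rightarrow> 'r. (\<lambda>x::'r. 0::'r) = (\<lambda>x. \<Sum>j\<in>UNIV. c j * tau j x)"
    using H[rule_format, OF dz] .
  then obtain c0 where u: "\<And>c'. (\<lambda>x::'r. 0::'r) = (\<lambda>x. \<Sum>j\<in>UNIV. c' j * tau j x) \<Longrightarrow> c' = c0"
    by (elim ex1E) blast
  have "c = c0" by (rule u[OF zero])
  moreover have "(\<lambda>_. 0) = c0" by (rule u[OF zero2])
  ultimately have "c = (\<lambda>_. 0)" by simp
  hence "c j = 0" by simp
  thus ?thesis unfolding c_def by simp
qed

theorem theorem6p4:
  fixes phi :: "'k::comm_ring_1 \<Rightarrow> 'r::comm_ring_1"
    and tau :: "'n::finite \<Rightarrow> 'r \<Rightarrow> 'r"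
    and g :: "'r^'n^'n"
    and half :: 'k
  assumes half: "2 * half = 1"
    and hom: "ring_hom_map phi"
    and basis: "is_der_basis phi tau"
    and comm: "pairwise_commuting tau"
    and ginv: "invertible g"
    and comm': "pairwise_commuting (new_ders g tau)"
  shows "\<forall>i j. h_Omega tau g (phi half) i j - h_E tau g (phi half) i j = 0"
proof (intro allI)
  fix i j
  define G where "G = matrix_inv g"
  have der: "is_k_derivation phi (tau i)" for i using basis unfolding is_der_basis_def by blast
  have add: "tau i (x + y) = tau i x + tau i y" for i x y using der[of i] unfolding is_k_derivation_def by blast
  have tc: "tau i (tau j x) = tau j (tau i x)" for i j x
    using comm unfolding pairwise_commuting_def by (metis comp_apply)
  have GgL: "(\<Sum>t\<in>UNIV. G$p$t * g$t$s) = (if p = s then 1 else 0)" for p s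
  proof -
    have "G ** g = mat 1" using inv_props[OF ginv] G_def by auto
    hence "(G ** g)$p$s = mat 1 $p$s" by simp
    thus ?thesis by (simp add: matrix_matrix_mult_def mat_def)
  qed
  have Cond: "(\<Sum>q\<in>UNIV. g$a$q * tau q (g$b$k)) = (\<Sum>q\<in>UNIV. g$b$q * tau q (g$a$k))" for a b k
    using cond_from_comm[OF basis comm comm'] .
  have X: "(\<Sum>q\<in>UNIV. \<Sum>p\<in>UNIV. \<Sum>r\<in>UNIV. tau q (g$i$p) * tau p (g$r$q) * G$j$r)
       = (\<Sum>q\<in>UNIV. \<Sum>p\<in>UNIV. \<Sum>t\<in>UNIV. tau q (g$i$p) * G$p$t * tau j (g$t$q))"
    using partX[of "\<lambda>p t. G$p$t" "\<lambda>p t. g$p$t" tau] GgL Cond by blast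
  have Y: "(\<Sum>q\<in>UNIV. \<Sum>\<mu>\<in>UNIV. \<Sum>\<beta>\<in>UNIV. \<Sum>\<gamma>\<in>UNIV. \<Sum>\<nu>\<in>UNIV.
            g$i$q * tau j (g$\<beta>$\<mu>) * G$\<gamma>$\<beta> * tau q (g$\<nu>$\<gamma>) * G$\<mu>$\<nu>)
       = (\<Sum>q\<in>UNIV. \<Sum>p\<in>UNIV. \<Sum>t\<in>UNIV. tau q (g$i$p) * G$p$t * tau j (g$t$q))"
    using partY[of "\<lambda>p t. G$p$t" "\<lambda>p t. g$p$t" tau] GgL Cond by blast
  have P1: "(\<Sum>\<nu>\<in>UNIV. \<Sum>q\<in>UNIV. \<Sum>\<mu>\<in>UNIV. g$i$q * tau q (g$\<mu>$\<nu>) * G$\<nu>$\<mu>)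
       = (\<Sum>p\<in>UNIV. tau p (g$i$p))"
    using part1[of "\<lambda>p t. G$p$t" "\<lambda>p t. g$p$t" tau] GgL Cond by blast
  have E1: "(\<Sum>\<nu>\<in>UNIV. tau j (g3 tau g i \<nu> \<nu>)) = (\<Sum>p\<in>UNIV. tau p (tau j (g$i$p)))"
  proof -
    have "(\<Sum>\<nu>\<in>UNIV. tau j (g3 tau g i \<nu> \<nu>)) = tau j (\<Sum>\<nu>\<in>UNIV. g3 tau g i \<nu> \<nu>)"
      by (rule der_sum[OF add, symmetric])
    also have "(\<Sum>\<nu>\<in>UNIV. g3 tau g i \<nu> \<nu>) = (\<Sum>p\<in>UNIV. tau p (g$i$p))"
      unfolding g3_def Amat_inv[OF ginv] using P1 by (simp add: Amat_def transpose_def G_def)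
    also have "tau j (\<Sum>p\<in>UNIV. tau p (g$i$p)) = (\<Sum>p\<in>UNIV. tau p (tau j (g$i$p)))"
      by (rule trans[OF der_sum[OF add]], rule sum.cong[OF refl], rule tc)
    finally show ?thesis .
  qed
  have E2: "h_E tau g (phi half) i j = (\<Sum>p\<in>UNIV. tau p (tau j (g$i$p))) + phi half *
       (\<Sum>q\<in>UNIV. \<Sum>\<mu>\<in>UNIV. \<Sum>\<beta>\<in>UNIV. \<Sum>\<gamma>\<in>UNIV. \<Sum>\<nu>\<in>UNIV.
            g$i$q * tau j (g$\<beta>$\<mu>) * G$\<gamma>$\<beta> * tau q (g$\<nu>$\<gamma>) * G$\<mu>$\<nu>)"
    unfolding h_E_def E1 Amat_inv[OF ginv] by (simp add: Amat_def transpose_def G_def)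
  have O: "h_Omega tau g (phi half) i j = (\<Sum>p\<in>UNIV. tau p (tau j (g$i$p))) + phi half *
       (\<Sum>q\<in>UNIV. \<Sum>p\<in>UNIV. \<Sum>r\<in>UNIV. tau q (g$i$p) * tau p (g$r$q) * G$j$r)"
    unfolding h_Omega_def G_def by simp
  show "h_Omega tau g (phi half) i j - h_E tau g (phi half) i j = 0"
    unfolding O E2 X Y by simp
qed

end
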